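(* Let $\Gamma_2(t)=\mathbb{A}(t)+\varepsilon^*\mathbb{A}^*(t)$ be a differentiable curve in $\mathbb{S}^2_{\mathbb{D}_2}$, $t\in[0,T]$, with $\mathbb{A}=\mathbf a_0+\varepsilon\mathbf a_1$, $\mathbb{A}^*=\mathbf a_2+\varepsilon\mathbf a_3$, and assume $\mathbf a_0'(t)\neq0$ for all $t$. Let $\Phi_2(t,\mathbb{U})=\mathbb{A}\times\mathbb{A}^*+\mathbb{U}\mathbb{A}$ be its corresponding ruled surface in $\mathbb{D}$. Define the arc-length functions $$s_{\Gamma_2}(t)=\int_0^t|\Gamma_2'(\sigma)|\,d\sigma,\qquad s_{\mathbb{A}}(t)=\int_0^t|\mathbb{A}'(\sigma)|\,d\sigma,\qquad s_{\mathbf a_0}(t)=\int_0^t|\mathbf a_0'(\sigma)|\,d\sigma.$$ Then $\Phi_2$ is developable if and only if (i) $s_{\Gamma_2}(t)=s_{\mathbb{A}}(t)$ for all $t$, or (ii) $s_{\Gamma_2}(t)=s_{\mathbf a_0}(t)$ for all $t$ and the real ruled surface $\Phi(t,u)=\mathbf a_0(t)\times\mathbf a_1(t)+u\,\mathbf a_0(t)$ in $\mathbb{R}^3$ is developable.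
   Context: Dual numbers $D=\{a+\varepsilon a^*\}$, $\varepsilon^2=0$, $\varepsilon\ne0$. Dual vectors $\mathbb{D}=\{\mathbf a+\varepsilon\mathbf a^*:\mathbf a,\mathbf a^*\in\mathbb{R}^3\}$ with $D$-valued inner product $\langle\mathbf a+\varepsilon\mathbf a^*,\mathbf b+\varepsilon\mathbf b^*\rangle=\mathbf a\cdot\mathbf b+\varepsilon(\mathbf a^*\cdot\mathbf b+\mathbf a\cdot\mathbf b^* )$, cross product $(\mathbf a+\varepsilon\mathbf a^* )\times(\mathbf b+\varepsilon\mathbf b^* )=\mathbf a\times\mathbf b+\varepsilon(\mathbf a\times\mathbf b^*+\mathbf a^*\times\mathbf b)$, dual determinant $\det(X,Y,Z)=\langle X,Y\times Z\rangle$, and norm (for $\mathbf a\neq0$) $|\mathbf a+\varepsilon\mathbf a^*|=|\mathbf a|+\varepsilon\frac{\mathbf a\cdot\mathbf a^*}{|\mathbf a|}$. Hyper-dual vectors $\mathbb{D}_2=\{\mathbb{A}+\varepsilon^*\mathbb{A}^*\}$ with $\varepsilon^{*2}=0$, $\varepsilon\varepsilon^*=\varepsilon^*\varepsilon\ne0$, $(\varepsilon\varepsilon^* )^2=0$; inner product $\langle\mathbb{A}+\varepsilon^*\mathbb{A}^*,\mathbb{B}+\varepsilon^*\mathbb{B}^*\rangle_2=\langle\mathbb{A},\mathbb{B}\rangle+\varepsilon^*(\langle\mathbb{A},\mathbb{B}^*\rangle+\langle\mathbb{A}^*,\mathbb{B}\rangle)$; norm (when the real part of $\mathbb{A}$ is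 nonzero) $|\mathbb{A}+\varepsilon^*\mathbb{A}^*|=|\mathbb{A}|+\varepsilon^*\frac{\langle\mathbb{A},\mathbb{A}^*\rangle}{|\mathbb{A}|}$ (division by an invertible dual number). Unit hyper-dual sphere $\mathbb{S}^2_{\mathbb{D}_2}=\{\mathbb{A}+\varepsilon^*\mathbb{A}^*:\langle\mathbb{A},\mathbb{A}\rangle=1,\langle\mathbb{A},\mathbb{A}^*\rangle=0\}$. Derivatives and integrals of dual/hyper-dual valued functions are taken componentwise. A ruled surface $\mathbb{B}(t)+\mathbb{U}\mathbb{B}^*(t)$ in $\mathbb{D}$ ($\mathbb{U}\in D$) is developable if $\det(\mathbb{B}',\mathbb{B}^*,\mathbb{B}^{*\prime})=0$ for all $t$; a real ruled surface $\beta(t)+u\alpha(t)$ in $\mathbb{R}^3$ is developable if $\det(\beta'(t),\alpha(t),\alpha'(t))=0$ for all $t$. *)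

theory Defs
  imports "HOL-Analysis.Analysis"
begin

text \<open>Dual numbers a + eps a* as pairs (a, a*); dual vectors a + eps a* as pairs of
  vectors in R^3; hyper-dual numbers/vectors X + eps* X* as pairs of dual numbers/vectors.\<close>

type_synonym dual = "real \<times> real"
type_synonym dvec = "(real^3) \<times> (real^3)"
type_synonym hdual = "dual \<times> dual"
type_synonym hdvec = "dvec \<times> dvec"

definition dmult :: "dual \<Rightarrow> dual \<Rightarrow> dual" where
  "dmult x y = (fst x * fst y, fst x * snd y + snd x * fst y)"

text \<open>division by an invertible dual number (real part nonzero)\<close>
definition ddiv :: "dual \<Rightarrow> dual \<Rightarrow> dual" where
  "ddiv x y = (fst x / fst y, (snd x * fst y - fst x * snd y) / (fst y)^2)"

definition dinner :: "dvec \<Rightarrow> dvec \<Rightarrow> dual" where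
  "dinner A B = (fst A \<bullet> fst B, snd A \<bullet> fst B + fst A \<bullet> snd B)"

definition dcross :: "dvec \<Rightarrow> dvec \<Rightarrow> dvec" where
  "dcross A B = (cross3 (fst A) (fst B), cross3 (fst A) (snd B) + cross3 (snd A) (fst B))"

definition ddet :: "dvec \<Rightarrow> dvec \<Rightarrow> dvec \<Rightarrow> dual" where
  "ddet X Y Z = dinner X (dcross Y Z)"

text \<open>dual norm (meaningful when the real part is nonzero)\<close>
definition dnorm :: "dvec \<Rightarrow> dual" where
  "dnorm A = (norm (fst A), (fst A \<bullet> snd A) / norm (fst A))"

definition hinner :: "hdvec \<Rightarrow> hdvec \<Rightarrow> hdual" where
  "hinner X Y = (dinner (fst X) (fst Y),
                 (\<lambda>(p,q). (fst p + fst q, snd p + snd q))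
                   (dinner (fst X) (snd Y), dinner (snd X) (fst Y)))"

text \<open>hyper-dual norm (meaningful when the real part of the dual part is nonzero)\<close>
definition hnorm :: "hdvec \<Rightarrow> hdual" where
  "hnorm X = (dnorm (fst X), ddiv (dinner (fst X) (snd X)) (dnorm (fst X)))"

definition hsphere :: "hdvec set" where
  "hsphere = {X. dinner (fst X) (fst X) = (1, 0) \<and> dinner (fst X) (snd X) = (0, 0)}"

definition vd :: "real set \<Rightarrow> (real \<Rightarrow> real^3) \<Rightarrow> real \<Rightarrow> real^3" where
  "vd S f t = vector_derivative f (at t within S)"

definition dvderiv :: "real set \<Rightarrow> (real \<Rightarrow> dvec) \<Rightarrow> real \<Rightarrow> dvec" where
  "dvderiv S B t = (vd S (\<lambda>s. fst (B s)) t, vd S (\<lambda>s. snd (B s)) t)"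

definition hvderiv :: "real set \<Rightarrow> (real \<Rightarrow> hdvec) \<Rightarrow> real \<Rightarrow> hdvec" where
  "hvderiv S G t = (dvderiv S (\<lambda>s. fst (G s)) t, dvderiv S (\<lambda>s. snd (G s)) t)"

definition dint :: "real \<Rightarrow> real \<Rightarrow> (real \<Rightarrow> dual) \<Rightarrow> dual" where
  "dint a b h = (integral {a..b} (\<lambda>s. fst (h s)), integral {a..b} (\<lambda>s. snd (h s)))"

definition hint :: "real \<Rightarrow> real \<Rightarrow> (real \<Rightarrow> hdual) \<Rightarrow> hdual" where
  "hint a b h = (dint a b (\<lambda>s. fst (h s)), dint a b (\<lambda>s. snd (h s)))"

definition hcurve :: "(real \<Rightarrow> real^3) \<Rightarrow> (real \<Rightarrow> real^3) \<Rightarrow> (real \<Rightarrow> real^3) \<Rightarrow> (real \<Rightarrow> real^3)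
    \<Rightarrow> real \<Rightarrow> hdvec" where
  "hcurve a0 a1 a2 a3 t = ((a0 t, a1 t), (a2 t, a3 t))"

text \<open>arc-length functions on the parameter domain [0,T], all as hyper-dual numbers\<close>
definition s_G2 :: "real \<Rightarrow> (real \<Rightarrow> hdvec) \<Rightarrow> real \<Rightarrow> hdual" where
  "s_G2 T G t = hint 0 t (\<lambda>\<sigma>. hnorm (hvderiv {0..T} G \<sigma>))"

definition s_A :: "real \<Rightarrow> (real \<Rightarrow> dvec) \<Rightarrow> real \<Rightarrow> hdual" where
  "s_A T A t = (dint 0 t (\<lambda>\<sigma>. dnorm (dvderiv {0..T} A \<sigma>)), (0, 0))"

definition s_a0 :: "real \<Rightarrow> (real \<Rightarrow> real^3) \<Rightarrow> real \<Rightarrow> hdual" where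
  "s_a0 T a t = ((integral {0..t} (\<lambda>\<sigma>. norm (vd {0..T} a \<sigma>)), 0), (0, 0))"

text \<open>ruled surface B(t) + U B*(t) in the dual space, developable on S\<close>
definition dual_ruled_developable :: "real set \<Rightarrow> (real \<Rightarrow> dvec) \<Rightarrow> (real \<Rightarrow> dvec) \<Rightarrow> bool" where
  "dual_ruled_developable S B Bs \<longleftrightarrow>
     (\<forall>t\<in>S. ddet (dvderiv S B t) (Bs t) (dvderiv S Bs t) = (0, 0))"

text \<open>real ruled surface beta(t) + u alpha(t), developable on S\<close>
definition real_ruled_developable :: "real set \<Rightarrow> (real \<Rightarrow> real^3) \<Rightarrow> (real \<Rightarrow> real^3) \<Rightarrow> bool" where
  "real_ruled_developable S \<beta> \<alpha> \<longleftrightarrow>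
     (\<forall>t\<in>S. vd S \<beta> t \<bullet> cross3 (\<alpha> t) (vd S \<alpha> t) = 0)"

end

theory Submission imports Defs begin
lemma lagr: "(cross3 a b) \<bullet> (cross3 c d) = (a\<bullet>c)*(b\<bullet>d) - (a\<bullet>d)*(b\<bullet>c)"
  by (simp add: cross3_simps)

lemma alg:
  assumes "xa\<bullet>xa = 1" "xa\<bullet>xb = 0" "xa\<bullet>xc = 0" "xb\<bullet>xc+xa\<bullet>xd=0" "xa\<bullet>ya=0" "xa\<bullet>yb + ya\<bullet>xb = 0"
  shows "(cross3 xa yc + cross3 ya xc)\<bullet>(cross3 xa ya) = ya\<bullet>yc"
   "(cross3 xa yd + cross3 ya xd + (cross3 xb yc + cross3 yb xc))\<bullet>(cross3 xa ya) + (cross3 xa yc + cross3 ya xc)\<bullet>(cross3 xa yb + cross3 xb ya) = yb\<bullet>yc + ya\<bullet>yd"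
proof -
  have e: "xa\<bullet>xd = -(xb\<bullet>xc)" "xa\<bullet>yb = -(xb\<bullet>ya)" using assms by (auto simp: inner_commute)
  have c: "ya\<bullet>xa = 0" "xb\<bullet>xa = 0" "xc\<bullet>xa = 0" "yb\<bullet>xa = -(xb\<bullet>ya)" "xd\<bullet>xa = -(xb\<bullet>xc)"
     "ya\<bullet>xb = xb\<bullet>ya" "ya \<bullet> xc = xc \<bullet> ya" "xa\<bullet>ya=0" "xa\<bullet>xa = 1" "xa\<bullet>xb = 0" "xa\<bullet>xc = 0"
    "yc\<bullet>xa = xa\<bullet>yc" "yd\<bullet>ya = ya\<bullet>yd" "yc\<bullet>ya = ya\<bullet>yc" "yc\<bullet>yb = yb\<bullet>yc" "yc\<bullet>xb = xb\<bullet>yc" "xc\<bullet>xb = xb\<bullet>xc"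
    "yb\<bullet>ya = ya\<bullet>yb" "xc\<bullet>yb = yb\<bullet>xc" "xd\<bullet>ya = ya\<bullet>xd"
    using assms e by (auto simp: inner_commute)
  show "(cross3 xa yc + cross3 ya xc)\<bullet>(cross3 xa ya) = ya\<bullet>yc"
    by (simp add: inner_add_left inner_add_right lagr c e)
  show "(cross3 xa yd + cross3 ya xd + (cross3 xb yc + cross3 yb xc))\<bullet>(cross3 xa ya) + (cross3 xa yc + cross3 ya xc)\<bullet>(cross3 xa yb + cross3 xb ya) = yb\<bullet>yc + ya\<bullet>yd"
    by (simp add: inner_add_left inner_add_right lagr c e algebra_simps)
qed
lemma cross_bb: "bounded_bilinear cross3"
  using bilinear_conv_bounded_bilinear bilinear_cross by blast

lemma vdw: assumes "f differentiable (at t within {0..T})"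
  shows "(f has_vector_derivative vd {0..T} f t) (at t within {0..T})"
  using assms unfolding vd_def by (simp add: vector_derivative_works)

lemma vd_eq: assumes "0 < T" "t \<in> {0..T}" "(f has_vector_derivative f') (at t within {0..T})"
  shows "vd {0..T} f t = f'"
  using vector_derivative_within_cbox[of 0 T t f f'] assms unfolding vd_def by simp

lemma vd_cross:
  assumes "0 < T" "t \<in> {0..T}" "f differentiable (at t within {0..T})"
    "g differentiable (at t within {0..T})"
  shows "vd {0..T} (\<lambda>s. cross3 (f s) (g s)) t = cross3 (f t) (vd {0..T} g t) + cross3 (vd {0..T} f t) (g t)"
  by (rule vd_eq[OF assms(1,2)], rule bounded_bilinear.has_vector_derivative[OF cross_bb vdw[OF assms(3)] vdw[OF assms(4)]])

lemma vd_cross2: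
  assumes "0 < T" "t \<in> {0..T}" "f differentiable (at t within {0..T})"
    "g differentiable (at t within {0..T})" "h differentiable (at t within {0..T})"
    "k differentiable (at t within {0..T})"
  shows "vd {0..T} (\<lambda>s. cross3 (f s) (g s) + cross3 (h s) (k s)) t =
     cross3 (f t) (vd {0..T} g t) + cross3 (vd {0..T} f t) (g t)
     + (cross3 (h t) (vd {0..T} k t) + cross3 (vd {0..T} h t) (k t))"
  by (rule vd_eq[OF assms(1,2)], intro has_vector_derivative_add
      bounded_bilinear.has_vector_derivative[OF cross_bb] vdw assms)

lemma inner_const:
  assumes "0 < T" "t \<in> {0..T}" "f differentiable (at t within {0..T})"
    "g differentiable (at t within {0..T})" "\<forall>s\<in>{0..T}. f s \<bullet> g s = c"
  shows "f t \<bullet> vd {0..T} g t + vd {0..T} f t \<bullet> g t = 0"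
proof -
  have 1: "((\<lambda>s. f s \<bullet> g s) has_vector_derivative (f t \<bullet> vd {0..T} g t + vd {0..T} f t \<bullet> g t)) (at t within {0..T})"
    by (rule bounded_bilinear.has_vector_derivative[OF bounded_bilinear_inner vdw[OF assms(3)] vdw[OF assms(4)]])
  have 2: "((\<lambda>s. f s \<bullet> g s) has_vector_derivative 0) (at t within {0..T})"
    by (rule has_vector_derivative_transform[where f="\<lambda>s. c"]) (use assms in auto)
  show ?thesis using vector_derivative_unique_within_closed_interval[of 0 T t _ _ 0] 1 2 assms(1,2) by simp
qed

lemma zero_integrals:
  fixes f :: "real \<Rightarrow> real"
  assumes "0 < T" "continuous_on {0..T} f" "\<forall>t\<in>{0..T}. integral {0..t} f = 0" "t \<in> {0..T}"
  shows "f t = 0"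
proof -
  have 1: "((\<lambda>u. integral {0..u} f) has_vector_derivative f t) (at t within {0..T})"
    by (rule integral_has_vector_derivative) (use assms in auto)
  have 2: "((\<lambda>u. integral {0..u} f) has_vector_derivative 0) (at t within {0..T})"
    by (rule has_vector_derivative_transform[where f="\<lambda>s. 0"]) (use assms in auto)
  show ?thesis using vector_derivative_unique_within_closed_interval[of 0 T t _ _ 0] 1 2 assms(1,4) by simp
qed


theorem corollary2:
  fixes a0 a1 a2 a3 :: "real \<Rightarrow> real^3" and T :: real
  assumes T: "T > 0"
    and diff: "\<forall>f\<in>{a0, a1, a2, a3}. (\<forall>t\<in>{0..T}. f differentiable (at t within {0..T}))
                 \<and> continuous_on {0..T} (vd {0..T} f)"
    and sphere: "\<forall>t\<in>{0..T}. hcurve a0 a1 a2 a3 t \<in> hsphere"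
    and a0': "\<forall>t\<in>{0..T}. vd {0..T} a0 t \<noteq> 0"
  shows "dual_ruled_developable {0..T}
            (\<lambda>t. dcross (a0 t, a1 t) (a2 t, a3 t)) (\<lambda>t. (a0 t, a1 t))
         \<longleftrightarrow>
         ((\<forall>t\<in>{0..T}. s_G2 T (hcurve a0 a1 a2 a3) t = s_A T (\<lambda>t. (a0 t, a1 t)) t)
          \<or> ((\<forall>t\<in>{0..T}. s_G2 T (hcurve a0 a1 a2 a3) t = s_a0 T a0 t)
             \<and> real_ruled_developable {0..T} (\<lambda>t. cross3 (a0 t) (a1 t)) a0))"
proof -
  define S where "S = {0..T::real}"
  define b0 where "b0 = vd S a0"
  define b1 where "b1 = vd S a1"
  define b2 where "b2 = vd S a2"
  define b3 where "b3 = vd S a3"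
  have D: "\<And>t. t \<in> S \<Longrightarrow> a0 differentiable (at t within S) \<and> a1 differentiable (at t within S)
     \<and> a2 differentiable (at t within S) \<and> a3 differentiable (at t within S)"
    using diff unfolding S_def by auto
  have C: "continuous_on S b0" "continuous_on S b1" "continuous_on S b2" "continuous_on S b3"
    using diff unfolding S_def b0_def b1_def b2_def b3_def by auto
  have nz: "\<And>t. t \<in> S \<Longrightarrow> norm (b0 t) \<noteq> 0" using a0' unfolding S_def b0_def by auto
  have sph: "\<And>t. t \<in> S \<Longrightarrow> a0 t \<bullet> a0 t = 1 \<and> a0 t \<bullet> a1 t = 0 \<and> a0 t \<bullet> a2 t = 0 \<and> a1 t \<bullet> a2 t + a0 t \<bullet> a3 t = 0"
    using sphere unfolding S_def hsphere_def hcurve_def dinner_def by (auto simp: inner_commute)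
  have d1: "\<And>t. t \<in> S \<Longrightarrow> a0 t \<bullet> b0 t = 0"
  proof -
    fix t assume t: "t \<in> S"
    have "a0 t \<bullet> b0 t + b0 t \<bullet> a0 t = 0"
      using inner_const[OF T, of t a0 a0 1] t D sph unfolding S_def b0_def by auto
    thus "a0 t \<bullet> b0 t = 0" by (simp add: inner_commute)
  qed
  have d2: "\<And>t. t \<in> S \<Longrightarrow> a0 t \<bullet> b1 t + b0 t \<bullet> a1 t = 0"
    using inner_const[OF T, of _ a0 a1 0] D sph unfolding S_def b0_def b1_def by auto
  define P where "P t \<longleftrightarrow> b0 t \<bullet> b2 t = 0 \<and> b1 t \<bullet> b2 t + b0 t \<bullet> b3 t = 0" for t
  have L: "dual_ruled_developable {0..T}
            (\<lambda>t. dcross (a0 t, a1 t) (a2 t, a3 t)) (\<lambda>t. (a0 t, a1 t)) \<longleftrightarrow> (\<forall>t\<in>S. P t)"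
  proof -
    have "ddet (dvderiv {0..T} (\<lambda>t. dcross (a0 t, a1 t) (a2 t, a3 t)) t) (a0 t, a1 t)
            (dvderiv {0..T} (\<lambda>t. (a0 t, a1 t)) t) = (b0 t \<bullet> b2 t, b1 t \<bullet> b2 t + b0 t \<bullet> b3 t)"
      if t: "t \<in> S" for t
    proof -
      have "vd {0..T} (\<lambda>s. cross3 (a0 s) (a2 s)) t = cross3 (a0 t) (b2 t) + cross3 (b0 t) (a2 t)"
        using vd_cross[OF T, of t a0 a2] t D unfolding S_def b0_def b2_def by auto
      moreover have "vd {0..T} (\<lambda>s. cross3 (a0 s) (a3 s) + cross3 (a1 s) (a2 s)) t =
         cross3 (a0 t) (b3 t) + cross3 (b0 t) (a3 t) + (cross3 (a1 t) (b2 t) + cross3 (b1 t) (a2 t))"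
        using vd_cross2[OF T, of t a0 a3 a1 a2] t D unfolding S_def b0_def b1_def b2_def b3_def by auto
      ultimately have e1: "dvderiv {0..T} (\<lambda>t. dcross (a0 t, a1 t) (a2 t, a3 t)) t =
         (cross3 (a0 t) (b2 t) + cross3 (b0 t) (a2 t),
          cross3 (a0 t) (b3 t) + cross3 (b0 t) (a3 t) + (cross3 (a1 t) (b2 t) + cross3 (b1 t) (a2 t)))"
        by (simp add: dvderiv_def dcross_def)
      have e2: "dvderiv {0..T} (\<lambda>t. (a0 t, a1 t)) t = (b0 t, b1 t)"
        by (simp add: dvderiv_def b0_def b1_def S_def)
      have s: "a0 t \<bullet> a0 t = 1" "a0 t \<bullet> a1 t = 0" "a0 t \<bullet> a2 t = 0" "a1 t \<bullet> a2 t + a0 t \<bullet> a3 t = 0"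
        using sph[OF t] by auto
      show ?thesis
        unfolding e1 e2 unfolding ddet_def dinner_def dcross_def fst_conv snd_conv
        using alg(1)[OF s d1[OF t] d2[OF t]] alg(2)[OF s d1[OF t] d2[OF t]]
        by (simp only: prod.inject)
    qed
    thus ?thesis unfolding dual_ruled_developable_def P_def S_def by (simp add: prod_eq_iff)
  qed
  define p where "p \<sigma> = fst (ddiv (dinner (b0 \<sigma>, b1 \<sigma>) (b2 \<sigma>, b3 \<sigma>)) (dnorm (b0 \<sigma>, b1 \<sigma>)))" for \<sigma>
  define q where "q \<sigma> = snd (ddiv (dinner (b0 \<sigma>, b1 \<sigma>) (b2 \<sigma>, b3 \<sigma>)) (dnorm (b0 \<sigma>, b1 \<sigma>)))" for \<sigma>
  have G: "snd (s_G2 T (hcurve a0 a1 a2 a3) t) = (integral {0..t} p, integral {0..t} q)" for t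
    unfolding s_G2_def hint_def dint_def hnorm_def hvderiv_def hcurve_def dvderiv_def p_def q_def
      b0_def b1_def b2_def b3_def S_def by simp
  have GA: "fst (s_G2 T (hcurve a0 a1 a2 a3) t) = fst (s_A T (\<lambda>t. (a0 t, a1 t)) t)" for t
    unfolding s_G2_def s_A_def hint_def dint_def hnorm_def hvderiv_def hcurve_def by simp
  have sA: "snd (s_A T A t) = (0,0)" "snd (s_a0 T a t) = (0,0)" for A a t
    unfolding s_A_def s_a0_def by simp_all
  have pq: "p t = (b0 t \<bullet> b2 t) / norm (b0 t)"
     "q t = ((b1 t \<bullet> b2 t + b0 t \<bullet> b3 t) * norm (b0 t) - (b0 t \<bullet> b2 t) * ((b0 t \<bullet> b1 t) / norm (b0 t))) / (norm (b0 t))^2" for t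
    unfolding p_def q_def ddiv_def dinner_def dnorm_def by simp_all
  have cp: "continuous_on S p" "continuous_on S q"
    unfolding pq using C nz by (auto intro!: continuous_intros)
  have R: "(\<forall>t\<in>S. integral {0..t} p = 0 \<and> integral {0..t} q = 0) \<longleftrightarrow> (\<forall>t\<in>S. P t)"
  proof
    assume H: "\<forall>t\<in>S. integral {0..t} p = 0 \<and> integral {0..t} q = 0"
    show "\<forall>t\<in>S. P t"
    proof
      fix t assume t: "t \<in> S"
      have "p t = 0" using zero_integrals[OF T, of p t] cp H t unfolding S_def by auto
      moreover have "q t = 0" using zero_integrals[OF T, of q t] cp H t unfolding S_def by auto
      ultimately have e1: "b0 t \<bullet> b2 t = 0" and e2: "norm (b0 t) * (b1 t \<bullet> b2 t + b0 t \<bullet> b3 t) = 0"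
        using nz[OF t] unfolding pq by (simp_all add: field_simps)
      from e2 have "b1 t \<bullet> b2 t + b0 t \<bullet> b3 t = 0" using nz[OF t] by simp
      with e1 show "P t" unfolding P_def by simp
    qed
  next
    assume H: "\<forall>t\<in>S. P t"
    show "\<forall>t\<in>S. integral {0..t} p = 0 \<and> integral {0..t} q = 0"
    proof
      fix t assume t: "t \<in> S"
      have z: "p s = 0 \<and> q s = 0" if "s \<in> {0..t}" for s
        using H that t unfolding P_def pq S_def by auto
      have "integral {0..t} p = integral {0..t} (\<lambda>s. 0)" by (rule integral_cong) (use z in auto)
      moreover have "integral {0..t} q = integral {0..t} (\<lambda>s. 0)" by (rule integral_cong) (use z in auto)
      ultimately show "integral {0..t} p = 0 \<and> integral {0..t} q = 0" by simp
    qed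
  qed
  have Q: "s_G2 T (hcurve a0 a1 a2 a3) t = s_A T (\<lambda>t. (a0 t, a1 t)) t \<longleftrightarrow> (integral {0..t} p = 0 \<and> integral {0..t} q = 0)" for t
  proof -
    have "s_G2 T (hcurve a0 a1 a2 a3) t = s_A T (\<lambda>t. (a0 t, a1 t)) t \<longleftrightarrow>
       fst (s_G2 T (hcurve a0 a1 a2 a3) t) = fst (s_A T (\<lambda>t. (a0 t, a1 t)) t) \<and>
       snd (s_G2 T (hcurve a0 a1 a2 a3) t) = snd (s_A T (\<lambda>t. (a0 t, a1 t)) t)" by (rule prod_eq_iff)
    also have "\<dots> \<longleftrightarrow> (integral {0..t} p, integral {0..t} q) = (0, 0)" unfolding GA G sA by (simp only: simp_thms)
    finally show ?thesis by (simp only: prod.inject)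
  qed
  have Q2: "s_G2 T (hcurve a0 a1 a2 a3) t = s_a0 T a0 t \<Longrightarrow> (integral {0..t} p = 0 \<and> integral {0..t} q = 0)" for t
  proof -
    assume "s_G2 T (hcurve a0 a1 a2 a3) t = s_a0 T a0 t"
    hence "snd (s_G2 T (hcurve a0 a1 a2 a3) t) = snd (s_a0 T a0 t)" by (rule arg_cong)
    hence "(integral {0..t} p, integral {0..t} q) = (0, 0)" by (simp only: G sA)
    thus ?thesis by (simp only: prod.inject)
  qed
  have E1: "(\<forall>t\<in>{0..T}. s_G2 T (hcurve a0 a1 a2 a3) t = s_A T (\<lambda>t. (a0 t, a1 t)) t) \<longleftrightarrow> (\<forall>t\<in>S. P t)"
  proof -
    have "(\<forall>t\<in>{0..T}. s_G2 T (hcurve a0 a1 a2 a3) t = s_A T (\<lambda>t. (a0 t, a1 t)) t) \<longleftrightarrow>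
      (\<forall>t\<in>S. integral {0..t} p = 0 \<and> integral {0..t} q = 0)" by (simp only: Q S_def)
    also have "\<dots> \<longleftrightarrow> (\<forall>t\<in>S. P t)" by (rule R)
    finally show ?thesis .
  qed
  have E2: "(\<forall>t\<in>S. P t)" if H: "\<forall>t\<in>{0..T}. s_G2 T (hcurve a0 a1 a2 a3) t = s_a0 T a0 t"
  proof -
    have "\<forall>t\<in>S. integral {0..t} p = 0 \<and> integral {0..t} q = 0"
    proof
      fix t assume "t \<in> S"
      hence "s_G2 T (hcurve a0 a1 a2 a3) t = s_a0 T a0 t" using H unfolding S_def by blast
      thus "integral {0..t} p = 0 \<and> integral {0..t} q = 0" by (rule Q2)
    qed
    thus ?thesis using R by (rule iffD1[rotated])
  qed
  show ?thesis
  proof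
    assume "dual_ruled_developable {0..T}
            (\<lambda>t. dcross (a0 t, a1 t) (a2 t, a3 t)) (\<lambda>t. (a0 t, a1 t))"
    hence "\<forall>t\<in>S. P t" using L by (rule iffD1[rotated])
    hence "\<forall>t\<in>{0..T}. s_G2 T (hcurve a0 a1 a2 a3) t = s_A T (\<lambda>t. (a0 t, a1 t)) t" using E1 by (rule iffD2[rotated])
    thus "((\<forall>t\<in>{0..T}. s_G2 T (hcurve a0 a1 a2 a3) t = s_A T (\<lambda>t. (a0 t, a1 t)) t)
          \<or> ((\<forall>t\<in>{0..T}. s_G2 T (hcurve a0 a1 a2 a3) t = s_a0 T a0 t)
             \<and> real_ruled_developable {0..T} (\<lambda>t. cross3 (a0 t) (a1 t)) a0))" by (rule disjI1)
  next
    assume H: "((\<forall>t\<in>{0..T}. s_G2 T (hcurve a0 a1 a2 a3) t = s_A T (\<lambda>t. (a0 t, a1 t)) t)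
          \<or> ((\<forall>t\<in>{0..T}. s_G2 T (hcurve a0 a1 a2 a3) t = s_a0 T a0 t)
             \<and> real_ruled_developable {0..T} (\<lambda>t. cross3 (a0 t) (a1 t)) a0))"
    have "\<forall>t\<in>S. P t"
    proof (rule disjE[OF H])
      assume "\<forall>t\<in>{0..T}. s_G2 T (hcurve a0 a1 a2 a3) t = s_A T (\<lambda>t. (a0 t, a1 t)) t"
      thus ?thesis using E1 by (rule iffD1[rotated])
    next
      assume "(\<forall>t\<in>{0..T}. s_G2 T (hcurve a0 a1 a2 a3) t = s_a0 T a0 t)
             \<and> real_ruled_developable {0..T} (\<lambda>t. cross3 (a0 t) (a1 t)) a0"
      thus ?thesis using E2 by blast
    qed
    thus "dual_ruled_developable {0..T}
            (\<lambda>t. dcross (a0 t, a1 t) (a2 t, a3 t)) (\<lambda>t. (a0 t, a1 t))" using L by (rule iffD2[rotated])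
  qed
qed

end
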